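(* Let $\underline{d}=(d_0,\dots,d_n)\in\mathbb{N}^{n+1}$ and let $M$ be the quiver module (for the equioriented type A quiver $0\to1\to\cdots\to n$ over $\mathbb{C}$) associated with the following lace diagram: in column $x$ place the dots $(x,y)$ for $0\le y<d_x$ (columns aligned at the bottom), and join every pair of dots $(x,y),(x+1,y)$ that are both present by a segment. Then $\mathrm{Ext}(M,M)=0$.
   Context: The quiver module associated with a lace diagram has at vertex $x$ the vector space with basis the dots of column $x$, and the map from vertex $x-1$ to vertex $x$ sends a dot to the dot it is joined to by a segment in column $x$, or to $0$ if there is no such segment. $\mathrm{Ext}=\mathrm{Ext}^1$ in the category of quiver modules. *)

theory Defs
  imports "Jordan_Normal_Form.Matrix" Complex_Main
begin

text \<open>Representations (quiver modules) of the equioriented type A quiver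
  0 -> 1 -> ... -> n over the complex numbers, given in coordinates:
  a pair (V, A) where V x is the dimension of the space at vertex x (the space
  is complex^(V x)) and A x is the matrix of the arrow x -> x+1.\<close>

type_synonym rep = "(nat \<Rightarrow> nat) \<times> (nat \<Rightarrow> complex mat)"

definition is_rep :: "nat \<Rightarrow> rep \<Rightarrow> bool" where
  "is_rep n M \<longleftrightarrow> (\<forall>x<n. snd M x \<in> carrier_mat (fst M (Suc x)) (fst M x))"

definition is_hom :: "nat \<Rightarrow> rep \<Rightarrow> rep \<Rightarrow> (nat \<Rightarrow> complex mat) \<Rightarrow> bool" where
  "is_hom n M N f \<longleftrightarrow>
     (\<forall>x\<le>n. f x \<in> carrier_mat (fst N x) (fst M x)) \<and>
     (\<forall>x<n. f (Suc x) * snd M x = snd N x * f x)"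

definition short_exact ::
  "nat \<Rightarrow> rep \<Rightarrow> rep \<Rightarrow> rep \<Rightarrow> (nat \<Rightarrow> complex mat) \<Rightarrow> (nat \<Rightarrow> complex mat) \<Rightarrow> bool" where
  "short_exact n N E M i p \<longleftrightarrow>
     is_hom n N E i \<and> is_hom n E M p \<and>
     (\<forall>x\<le>n.
        (\<forall>u\<in>carrier_vec (fst N x). i x *\<^sub>v u = 0\<^sub>v (fst E x) \<longrightarrow> u = 0\<^sub>v (fst N x)) \<and>
        (\<forall>w\<in>carrier_vec (fst M x). \<exists>v\<in>carrier_vec (fst E x). p x *\<^sub>v v = w) \<and>
        (\<forall>v\<in>carrier_vec (fst E x).
            p x *\<^sub>v v = 0\<^sub>v (fst M x) \<longleftrightarrow> (\<exists>u\<in>carrier_vec (fst N x). v = i x *\<^sub>v u)))"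

text \<open>Ext^1(M, N) = 0 (Yoneda): every extension 0 -> N -> E -> M -> 0 splits.\<close>
definition Ext_zero :: "nat \<Rightarrow> rep \<Rightarrow> rep \<Rightarrow> bool" where
  "Ext_zero n M N \<longleftrightarrow>
     (\<forall>E i p. is_rep n E \<and> short_exact n N E M i p \<longrightarrow>
        (\<exists>s. is_hom n M E s \<and> (\<forall>x\<le>n. p x * s x = 1\<^sub>m (fst M x))))"

text \<open>The quiver module of the bottom-aligned lace diagram with column sizes d:
  column x has dots (x,y), y < d x, basis vector y of complex^(d x); the arrow
  x -> x+1 sends dot (x,y) to (x+1,y) if that dot exists, else to 0.\<close>
definition lace_module :: "(nat \<Rightarrow> nat) \<Rightarrow> rep" where
  "lace_module d = (d, (\<lambda>x. mat (d (Suc x)) (d x) (\<lambda>(a, b). if a = b then 1 else 0)))"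

end

theory Submission
  imports Defs
begin

fun bpath :: "(nat \<Rightarrow> complex mat) \<Rightarrow> nat \<Rightarrow> nat \<Rightarrow> complex vec \<Rightarrow> complex vec" where
  "bpath B a 0 v = v"
| "bpath B a (Suc k) v = B (a + k) *\<^sub>v bpath B a k v"

lemma bpath_carrier:
  assumes "is_rep n M" "a + k \<le> n" "v \<in> carrier_vec (fst M a)"
  shows "bpath (snd M) a k v \<in> carrier_vec (fst M (a + k))"
  using assms(2)
proof (induction k)
  case 0 then show ?case using assms(3) by simp
next
  case (Suc k)
  then have "snd M (a + k) \<in> carrier_mat (fst M (Suc (a + k))) (fst M (a + k))"
    using assms(1) unfolding is_rep_def by auto
  with Suc show ?case by auto
qed

lemma bpath_minus:
  assumes "is_rep n M" "a + k \<le> n" "v \<in> carrier_vec (fst M a)" "w \<in> carrier_vec (fst M a)"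
  shows "bpath (snd M) a k (v - w) = bpath (snd M) a k v - bpath (snd M) a k w"
  using assms(2)
proof (induction k)
  case 0 then show ?case by simp
next
  case (Suc k)
  then have B: "snd M (a + k) \<in> carrier_mat (fst M (Suc (a + k))) (fst M (a + k))"
    using assms(1) unfolding is_rep_def by auto
  have "bpath (snd M) a k v \<in> carrier_vec (fst M (a + k))" "bpath (snd M) a k w \<in> carrier_vec (fst M (a + k))"
    using bpath_carrier[OF assms(1)] Suc.prems assms(3,4) by auto
  with Suc B show ?case by (simp add: mult_minus_distrib_mat_vec)
qed

lemma bpath_hom:
  assumes "is_rep n M" "is_rep n N" "is_hom n M N f" "a + k \<le> n" "v \<in> carrier_vec (fst M a)"
  shows "f (a + k) *\<^sub>v bpath (snd M) a k v = bpath (snd N) a k (f a *\<^sub>v v)"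
  using assms(4)
proof (induction k)
  case 0 then show ?case by simp
next
  case (Suc k)
  have B: "snd M (a + k) \<in> carrier_mat (fst M (Suc (a + k))) (fst M (a + k))"
    using assms(1) Suc.prems unfolding is_rep_def by auto
  have f1: "f (Suc (a + k)) \<in> carrier_mat (fst N (Suc (a + k))) (fst M (Suc (a + k)))"
    and f0: "f (a + k) \<in> carrier_mat (fst N (a + k)) (fst M (a + k))"
    and c: "f (Suc (a + k)) * snd M (a + k) = snd N (a + k) * f (a + k)"
    using assms(3) Suc.prems unfolding is_hom_def by auto
  have B2: "snd N (a + k) \<in> carrier_mat (fst N (Suc (a + k))) (fst N (a + k))"
    using assms(2) Suc.prems unfolding is_rep_def by auto
  have bc: "bpath (snd M) a k v \<in> carrier_vec (fst M (a + k))"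
    using bpath_carrier[OF assms(1)] Suc.prems assms(5) by auto
  have "f (a + Suc k) *\<^sub>v bpath (snd M) a (Suc k) v
     = (f (Suc (a + k)) * snd M (a + k)) *\<^sub>v bpath (snd M) a k v"
    using f1 B bc by simp
  also have "\<dots> = (snd N (a + k) * f (a + k)) *\<^sub>v bpath (snd M) a k v" using c by simp
  also have "\<dots> = snd N (a + k) *\<^sub>v (f (a + k) *\<^sub>v bpath (snd M) a k v)"
    using B2 f0 bc by simp
  finally show ?case using Suc by simp
qed

lemma lace_mult:
  assumes "u \<in> carrier_vec (d x)"
  shows "snd (lace_module d) x *\<^sub>v u = vec (d (Suc x)) (\<lambda>i. if i < d x then u $ i else 0)"
proof (rule eq_vecI)
  fix i assume "i < dim_vec (vec (d (Suc x)) (\<lambda>i. if i < d x then u $ i else 0))"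
  then have i: "i < d (Suc x)" by simp
  have "(snd (lace_module d) x *\<^sub>v u) $ i = (\<Sum>j = 0..<d x. (if i = j then 1 else 0) * u $ j)"
    using i assms unfolding lace_module_def by (simp add: scalar_prod_def)
  also have "\<dots> = (\<Sum>j \<in> {0..<d x}. if j = i then u $ j else 0)"
    by (rule sum.cong) auto
  also have "\<dots> = (if i < d x then u $ i else 0)" by (simp add: sum.delta)
  finally show "(snd (lace_module d) x *\<^sub>v u) $ i = vec (d (Suc x)) (\<lambda>i. if i < d x then u $ i else 0) $ i"
    using i by simp
qed (simp add: lace_module_def)

lemma lace_path:
  assumes "u \<in> carrier_vec (d a)"
  shows "bpath (snd (lace_module d)) a k u = vec (d (a + k)) (\<lambda>i. if (\<forall>j\<le>k. i < d (a + j)) then u $ i else 0)"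
proof (induction k)
  case 0
  show ?case using assms by (auto intro!: eq_vecI)
next
  case (Suc k)
  show ?case
    apply (simp add: Suc lace_mult)
    apply (rule eq_vecI)
     apply (auto simp: le_Suc_eq)
    done
qed

lemma lace_rep: "is_rep n (lace_module d)"
  unfolding is_rep_def lace_module_def by auto

definition goodv :: "nat \<Rightarrow> (nat \<Rightarrow> nat) \<Rightarrow> rep \<Rightarrow> (nat \<Rightarrow> complex mat) \<Rightarrow> nat \<Rightarrow> nat \<Rightarrow> complex vec \<Rightarrow> bool" where
  "goodv n d E p a y v \<longleftrightarrow> v \<in> carrier_vec (fst E a) \<and> p a *\<^sub>v v = unit_vec (d a) y \<and>
     (\<forall>k. a + k \<le> n \<longrightarrow> d (a + k) \<le> y \<longrightarrow> (\<forall>j<k. y < d (a + j)) \<longrightarrow>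
        bpath (snd E) a k v = 0\<^sub>v (fst E (a + k)))"

lemma goodv_exists:
  assumes E: "is_rep n E" and se: "short_exact n (lace_module d) E (lace_module d) i p"
    and a: "a \<le> n" and y: "y < d a"
  shows "\<exists>v. goodv n d E p a y v"
proof -
  have ih: "is_hom n (lace_module d) E i" and ph: "is_hom n E (lace_module d) p"
    using se unfolding short_exact_def by auto
  have L: "is_rep n (lace_module d)" by (rule lace_rep)
  have fstL: "fst (lace_module d) = d" by (simp add: lace_module_def)
  have surj: "\<And>x w. x \<le> n \<Longrightarrow> w \<in> carrier_vec (d x) \<Longrightarrow> \<exists>v\<in>carrier_vec (fst E x). p x *\<^sub>v v = w"
    using se unfolding short_exact_def fstL by auto
  have ker: "\<And>x v. x \<le> n \<Longrightarrow> v \<in> carrier_vec (fst E x) \<Longrightarrow>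
      (p x *\<^sub>v v = 0\<^sub>v (d x)) = (\<exists>u\<in>carrier_vec (d x). v = i x *\<^sub>v u)"
    using se unfolding short_exact_def fstL by auto
  have icar: "\<And>x. x \<le> n \<Longrightarrow> i x \<in> carrier_mat (fst E x) (d x)"
    using ih unfolding is_hom_def fstL by auto
  have pcar: "\<And>x. x \<le> n \<Longrightarrow> p x \<in> carrier_mat (d x) (fst E x)"
    using ph unfolding is_hom_def fstL by auto
  obtain v0 where v0: "v0 \<in> carrier_vec (fst E a)" "p a *\<^sub>v v0 = unit_vec (d a) y"
    using surj[OF a, of "unit_vec (d a) y"] by auto
  show ?thesis
  proof (cases "\<exists>k. a + k \<le> n \<and> d (a + k) \<le> y \<and> (\<forall>j<k. y < d (a + j))")
    case False
    then have "goodv n d E p a y v0" using v0 unfolding goodv_def by blast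
    then show ?thesis by blast
  next
    case True
    then obtain k0 where k0: "a + k0 \<le> n" "d (a + k0) \<le> y" "\<forall>j<k0. y < d (a + j)" by blast
    have uniq: "k = k0" if "d (a + k) \<le> y" "\<forall>j<k. y < d (a + j)" for k
    proof (rule ccontr)
      assume "k \<noteq> k0"
      then consider "k < k0" | "k0 < k" by linarith
      then show False
      proof cases
        case 1 then have "y < d (a + k)" using k0(3) by blast
        then show False using that(1) by simp
      next
        case 2 then have "y < d (a + k0)" using that(2) by blast
        then show False using k0(2) by simp
      qed
    qed
    define w' where "w' = bpath (snd E) a k0 v0"
    have w'c: "w' \<in> carrier_vec (fst E (a + k0))"
      unfolding w'_def using bpath_carrier[OF E k0(1) v0(1)] .
    have "p (a + k0) *\<^sub>v w' = bpath (snd (lace_module d)) a k0 (unit_vec (d a) y)"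
      unfolding w'_def using bpath_hom[OF E L ph k0(1) v0(1)] v0(2) by simp
    also have "\<dots> = 0\<^sub>v (d (a + k0))"
    proof (subst lace_path, simp, rule eq_vecI)
      fix t assume "t < dim_vec (0\<^sub>v (d (a + k0)) :: complex vec)"
      then have t: "t < d (a + k0)" by simp
      then have "t \<noteq> y" using k0(2) by simp
      then show "vec (d (a + k0)) (\<lambda>i. if \<forall>j\<le>k0. i < d (a + j) then unit_vec (d a) y $ i else 0) $ t = 0\<^sub>v (d (a + k0)) $ t"
      proof (cases "\<forall>j\<le>k0. t < d (a + j)")
        case True
        then have "t < d (a + 0)" by blast
        then show ?thesis using t \<open>t \<noteq> y\<close> True by (simp add: unit_vec_def)
      next
        case False
        then show ?thesis using t by (subst index_vec) (simp_all only: if_False index_zero_vec(1))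
      qed
    qed simp
    finally obtain w where w: "w \<in> carrier_vec (d (a + k0))" "w' = i (a + k0) *\<^sub>v w"
      using ker[OF k0(1) w'c] by auto
    define u where "u = vec (d a) (\<lambda>t. if t < d (a + k0) then w $ t else 0)"
    have uc: "u \<in> carrier_vec (d a)" unfolding u_def by simp
    have "bpath (snd (lace_module d)) a k0 u = w"
    proof -
      have "\<forall>j\<le>k0. t < d (a + j)" if "t < d (a + k0)" for t
      proof (intro allI impI)
        fix j assume "j \<le> k0"
        then consider "j = k0" | "j < k0" by linarith
        then show "t < d (a + j)"
        proof cases
          case 1 then show ?thesis using that by simp
        next
          case 2 then have "y < d (a + j)" using k0(3) by blast
          then show ?thesis using that k0(2) by linarith
        qed
      qed
      note all = this
      show ?thesis
      proof (subst lace_path[of u d a, OF uc], rule eq_vecI)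
        fix t assume "t < dim_vec w"
        then have t: "t < d (a + k0)" using w(1) by simp
        then have A: "\<forall>j\<le>k0. t < d (a + j)" using all by blast
        then have "t < d (a + 0)" by blast
        then show "vec (d (a + k0)) (\<lambda>i. if \<forall>j\<le>k0. i < d (a + j) then u $ i else 0) $ t = w $ t"
          using t A unfolding u_def by simp
      qed (use w(1) in simp)
    qed
    have a0: "a + 0 \<le> n" using a by simp
    have iuc: "i a *\<^sub>v u \<in> carrier_vec (fst E a)" using icar[OF a] uc by simp
    have piu: "p a *\<^sub>v (i a *\<^sub>v u) = 0\<^sub>v (d a)" using ker[OF a iuc] uc by auto
    define v where "v = v0 - i a *\<^sub>v u"
    have vc: "v \<in> carrier_vec (fst E a)" unfolding v_def using v0(1) iuc by simp
    have pv: "p a *\<^sub>v v = unit_vec (d a) y"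
      unfolding v_def using pcar[OF a] v0 iuc piu by (simp add: mult_minus_distrib_mat_vec)
    have "bpath (snd E) a k0 v = w' - bpath (snd E) a k0 (i a *\<^sub>v u)"
      unfolding v_def w'_def using bpath_minus[OF E k0(1) v0(1) iuc] .
    also have "bpath (snd E) a k0 (i a *\<^sub>v u) = i (a + k0) *\<^sub>v bpath (snd (lace_module d)) a k0 u"
      using bpath_hom[OF L E ih k0(1), of u] uc fstL by simp
    also have "\<dots> = w'" using w \<open>bpath (snd (lace_module d)) a k0 u = w\<close> by simp
    also have "w' - w' = 0\<^sub>v (fst E (a + k0))" using w'c by simp
    finally have "bpath (snd E) a k0 v = 0\<^sub>v (fst E (a + k0))" .
    then have "goodv n d E p a y v" using vc pv uniq unfolding goodv_def by auto
    then show ?thesis by blast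
  qed
qed

fun Sf :: "(nat \<Rightarrow> complex mat) \<Rightarrow> (nat \<Rightarrow> nat \<Rightarrow> complex vec) \<Rightarrow> (nat \<Rightarrow> nat) \<Rightarrow> nat \<Rightarrow> nat \<Rightarrow> complex vec" where
  "Sf B V d 0 y = V 0 y"
| "Sf B V d (Suc x) y = (if y < d x then B x *\<^sub>v Sf B V d x y else V (Suc x) y)"

lemma Sf_run:
  assumes "x \<le> n" "y < d x"
  shows "\<exists>a\<le>x. (\<forall>j. a \<le> j \<and> j \<le> x \<longrightarrow> y < d j) \<and> Sf B V d x y = bpath B a (x - a) (V a y)"
  using assms
proof (induction x)
  case 0 then show ?case by auto
next
  case (Suc x)
  show ?case
  proof (cases "y < d x")
    case True
    then obtain a where a: "a \<le> x" "\<forall>j. a \<le> j \<and> j \<le> x \<longrightarrow> y < d j"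
      "Sf B V d x y = bpath B a (x - a) (V a y)" using Suc by auto
    have "Suc x - a = Suc (x - a)" "a + (x - a) = x" using a(1) by auto
    then have "Sf B V d (Suc x) y = bpath B a (Suc x - a) (V a y)" using True a(3) by simp
    moreover have "\<forall>j. a \<le> j \<and> j \<le> Suc x \<longrightarrow> y < d j" using a(2) Suc.prems(2) le_Suc_eq by auto
    ultimately show ?thesis using a(1) by (intro exI[of _ a]) auto
  next
    case False
    then show ?thesis using Suc.prems by (intro exI[of _ "Suc x"]) auto
  qed
qed

theorem corollary2p5:
  fixes n :: nat and d :: "nat \<Rightarrow> nat"
  shows "Ext_zero n (lace_module d) (lace_module d)"
  unfolding Ext_zero_def
proof (intro allI impI, elim conjE)
  fix E i p
  assume E: "is_rep n E" and se: "short_exact n (lace_module d) E (lace_module d) i p"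
  have ih: "is_hom n (lace_module d) E i" and ph: "is_hom n E (lace_module d) p"
    using se unfolding short_exact_def by auto
  have L: "is_rep n (lace_module d)" by (rule lace_rep)
  have fstL: "fst (lace_module d) = d" by (simp add: lace_module_def)
  have pcar: "\<And>x. x \<le> n \<Longrightarrow> p x \<in> carrier_mat (d x) (fst E x)"
    using ph unfolding is_hom_def fstL by auto
  have Bcar: "\<And>x. x < n \<Longrightarrow> snd E x \<in> carrier_mat (fst E (Suc x)) (fst E x)"
    using E unfolding is_rep_def by auto
  have Acar: "\<And>x. snd (lace_module d) x \<in> carrier_mat (d (Suc x)) (d x)"
    by (simp add: lace_module_def)
  define V where "V a y = (SOME v. goodv n d E p a y v)" for a y
  have Vg: "goodv n d E p a y (V a y)" if "a \<le> n" "y < d a" for a y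
    unfolding V_def using someI_ex[OF goodv_exists[OF E se that]] .
  define S where "S = Sf (snd E) V d"
  have Sprop: "S x y \<in> carrier_vec (fst E x) \<and> p x *\<^sub>v S x y = unit_vec (d x) y \<and>
     (x < n \<longrightarrow> \<not> y < d (Suc x) \<longrightarrow> snd E x *\<^sub>v S x y = 0\<^sub>v (fst E (Suc x)))"
    if x: "x \<le> n" and y: "y < d x" for x y
  proof -
    obtain a where a: "a \<le> x" "\<forall>j. a \<le> j \<and> j \<le> x \<longrightarrow> y < d j"
      "S x y = bpath (snd E) a (x - a) (V a y)"
      using Sf_run[of x n y d "snd E" V, OF x y] unfolding S_def by blast
    have an: "a \<le> n" using a(1) x by simp
    have ya: "y < d a" using a(1,2) by auto
    have g: "goodv n d E p a y (V a y)" using Vg[OF an ya] .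
    have ax: "a + (x - a) = x" using a(1) by simp
    have ax': "a + (x - a) \<le> n" using ax x by simp
    have c: "S x y \<in> carrier_vec (fst E x)"
      using bpath_carrier[OF E ax'] g a(3) ax unfolding goodv_def by metis
    have "p x *\<^sub>v S x y = bpath (snd (lace_module d)) a (x - a) (unit_vec (d a) y)"
      using bpath_hom[OF E L ph ax'] g a(3) ax unfolding goodv_def fstL by metis
    also have "\<dots> = unit_vec (d x) y"
    proof (subst lace_path[of "unit_vec (d a) y" d a], simp, rule eq_vecI)
      fix t assume "t < dim_vec (unit_vec (d x) y :: complex vec)"
      then have t: "t < d x" by simp
      show "vec (d (a + (x - a))) (\<lambda>i. if \<forall>j\<le>x - a. i < d (a + j) then unit_vec (d a) y $ i else 0) $ t =
          unit_vec (d x) y $ t"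
      proof (cases "t = y")
        case True
        have "\<forall>j\<le>x - a. t < d (a + j)"
        proof (intro allI impI)
          fix j assume "j \<le> x - a"
          then have "a \<le> a + j \<and> a + j \<le> x" using a(1) by linarith
          then show "t < d (a + j)" using a(2) True by blast
        qed
        then show ?thesis using t True ax ya by simp
      next
        case False
        show ?thesis
        proof (cases "\<forall>j\<le>x - a. t < d (a + j)")
          case True
          then have "t < d (a + 0)" by blast
          then show ?thesis using t True False ax by (simp add: unit_vec_def)
        next
          case F2: False
          have u0: "unit_vec (d x) y $ t = 0" using t False by (simp add: unit_vec_def)
          show ?thesis using t ax u0 by (subst index_vec) (simp_all only: if_not_P[OF F2] u0)
        qed
      qed
    qed (use ax in simp)
    finally have pS: "p x *\<^sub>v S x y = unit_vec (d x) y" .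
    have z: "snd E x *\<^sub>v S x y = 0\<^sub>v (fst E (Suc x))" if xn: "x < n" and ny: "\<not> y < d (Suc x)"
    proof -
      have k: "a + Suc (x - a) \<le> n" "d (a + Suc (x - a)) \<le> y" "\<forall>j<Suc (x - a). y < d (a + j)"
        using ax xn ny a(2) by auto
      have "bpath (snd E) a (Suc (x - a)) (V a y) = 0\<^sub>v (fst E (a + Suc (x - a)))"
        using g k unfolding goodv_def by blast
      then show ?thesis using a(3) ax by simp
    qed
    show ?thesis using c pS z by blast
  qed
  define s where "s x = mat (fst E x) (d x) (\<lambda>(r, c). S x c $ r)" for x
  have scar: "s x \<in> carrier_mat (fst E x) (d x)" for x unfolding s_def by simp
  have sdims[simp]: "dim_row (s x) = fst E x" "dim_col (s x) = d x" for x unfolding s_def by simp_all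
  have scol: "col (s x) c = S x c" if "x \<le> n" "c < d x" for x c
    using Sprop[OF that] that unfolding s_def by (auto intro!: eq_vecI)
  have smul: "s x *\<^sub>v unit_vec (d x) c = S x c" if "x \<le> n" "c < d x" for x c
  proof -
    have "s x *\<^sub>v unit_vec (d x) c = s x *\<^sub>v col (1\<^sub>m (d x)) c" using that by simp
    also have "\<dots> = col (s x * 1\<^sub>m (d x)) c" using col_mult2[OF scar one_carrier_mat that(2)] by simp
    also have "\<dots> = S x c" using right_mult_one_mat[OF scar[of x]] scol[OF that] by simp
    finally show ?thesis .
  qed
  show "\<exists>s. is_hom n (lace_module d) E s \<and> (\<forall>x\<le>n. p x * s x = 1\<^sub>m (fst (lace_module d) x))"
  proof (intro exI[of _ s] conjI allI impI)
    show "is_hom n (lace_module d) E s"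
      unfolding is_hom_def fstL
    proof (intro conjI allI impI)
      fix x assume "x \<le> n" then show "s x \<in> carrier_mat (fst E x) (d x)" by (simp add: s_def)
    next
      fix x assume xn: "x < n"
      show "s (Suc x) * snd (lace_module d) x = snd E x * s x"
      proof (rule mat_col_eqI)
        fix c assume "c < dim_col (snd E x * s x)"
        then have c: "c < d x" using Bcar[OF xn] by simp
        have "col (s (Suc x) * snd (lace_module d) x) c = s (Suc x) *\<^sub>v col (snd (lace_module d) x) c"
          by (rule col_mult2[OF scar[of "Suc x"] Acar c])
        also have "\<dots> = snd E x *\<^sub>v S x c"
        proof (cases "c < d (Suc x)")
          case True
          have "col (snd (lace_module d) x) c = unit_vec (d (Suc x)) c"
            using c True unfolding lace_module_def unit_vec_def by simp
          then show ?thesis using smul[of "Suc x" c] True c xn by (simp add: S_def)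
        next
          case False
          have "col (snd (lace_module d) x) c = 0\<^sub>v (d (Suc x))"
            using c False unfolding lace_module_def by (auto intro!: eq_vecI)
          moreover have "s (Suc x) *\<^sub>v 0\<^sub>v (d (Suc x)) = 0\<^sub>v (fst E (Suc x))"
            using scar[of "Suc x"] by (auto intro!: eq_vecI simp: scalar_prod_def)
          ultimately show ?thesis using Sprop[of x c] xn c False by simp
        qed
        also have "\<dots> = col (snd E x * s x) c"
          using col_mult2[OF Bcar[OF xn] scar[of x] c] scol[of x c] xn c by simp
        finally show "col (s (Suc x) * snd (lace_module d) x) c = col (snd E x * s x) c" .
      qed (use Bcar[OF xn] Acar in auto)
    qed
  next
    fix x assume xn: "x \<le> n"
    show "p x * s x = 1\<^sub>m (fst (lace_module d) x)"
      unfolding fstL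
    proof (rule mat_col_eqI)
      fix c assume "c < dim_col (1\<^sub>m (d x) :: complex mat)"
      then have c: "c < d x" by simp
      have "col (p x * s x) c = p x *\<^sub>v S x c"
        using col_mult2[OF pcar[OF xn] scar[of x] c] scol[OF xn c] by simp
      also have "\<dots> = col (1\<^sub>m (d x)) c" using Sprop[OF xn c] c by simp
      finally show "col (p x * s x) c = col (1\<^sub>m (d x)) c" .
    qed (use pcar[OF xn] in auto)
  qed
qed

end
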